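(* Let $\psi:[0,1]\to[0,1]$ be a convex, strictly increasing, surjective, three times differentiable function with $\psi'>0$ on $(0,1]$ such that $x\psi'(x)/\psi(x)$ and $x\psi''(x)/\psi'(x)$ are strictly increasing on $(0,1]$. Let $n\ge2$ and for $r\ge0$ let $\phi_*(r)=\min\{\|(y,r)\|_\psi:\ y\in\mathbb R_+^{n-1},\ \|y\|_\psi=1\}$. Then $\phi_*(r)=\|(1,r)\|_\psi$ for all $r\ge0$, where $(1,r)\in\mathbb R^2$.
   Context: For $\psi:[0,1]\to[0,1]$ a continuous strictly increasing bijection and $v\in\mathbb R^k$ (any $k$), $\|v\|_\psi$ is $0$ if $v=0$ and otherwise the unique $s>0$ with $\sum_{i=1}^k\psi(|v_i|/s)=1$. $(y,r)\in\mathbb R^n$ denotes $y$ with $r$ appended. *)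

theory Defs
  imports "HOL-Analysis.Analysis"
begin

text \<open>The psi-"norm" of a finite vector, represented as a list of reals (so that
vectors of different lengths, e.g. in R^(n-1), R^n and R^2, can be compared).\<close>

definition psi_norm :: "(real \<Rightarrow> real) \<Rightarrow> real list \<Rightarrow> real" where
  "psi_norm \<psi> v =
     (if (\<forall>x\<in>set v. x = 0) then 0
      else (THE s. s > 0 \<and> (\<forall>x\<in>set v. \<bar>x\<bar> / s \<le> 1) \<and>
                  (\<Sum>x\<leftarrow>v. \<psi> (\<bar>x\<bar> / s)) = 1))"

end

theory Submission
  imports Defs
begin

definition pnP :: "(real \<Rightarrow> real) \<Rightarrow> real list \<Rightarrow> real \<Rightarrow> bool" where
  "pnP \<psi> v s \<longleftrightarrow> s > 0 \<and> (\<forall>x\<in>set v. \<bar>x\<bar> / s \<le> 1) \<and> (\<Sum>x\<leftarrow>v. \<psi> (\<bar>x\<bar> / s)) = 1"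

lemma psi_norm_alt: "psi_norm \<psi> v = (if \<forall>x\<in>set v. x = 0 then 0 else THE s. pnP \<psi> v s)"
  by (simp add: psi_norm_def pnP_def)

lemma sl_mono: "(\<And>x. x \<in> set v \<Longrightarrow> (f x::real) \<le> g x) \<Longrightarrow> (\<Sum>x\<leftarrow>v. f x) \<le> (\<Sum>x\<leftarrow>v. g x)"
  by (induction v) (auto intro: add_mono)

lemma sl_strict: "(\<And>x. x \<in> set v \<Longrightarrow> (f x::real) \<le> g x) \<Longrightarrow> x0 \<in> set v \<Longrightarrow> f x0 < g x0
   \<Longrightarrow> (\<Sum>x\<leftarrow>v. f x) < (\<Sum>x\<leftarrow>v. g x)"
proof (induction v)
  case Nil then show ?case by simp
next
  case (Cons a v)
  show ?case
  proof (cases "x0 = a")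
    case True
    then show ?thesis using Cons.prems sl_mono[of v f g] by (auto intro: add_less_le_mono)
  next
    case False
    then have "(\<Sum>x\<leftarrow>v. f x) < (\<Sum>x\<leftarrow>v. g x)" using Cons by auto
    then show ?thesis using Cons.prems by (auto intro: add_le_less_mono)
  qed
qed

lemma sl_nonneg_mem: "(\<And>x. x \<in> set v \<Longrightarrow> (0::real) \<le> f x) \<Longrightarrow> x0 \<in> set v \<Longrightarrow> f x0 \<le> (\<Sum>x\<leftarrow>v. f x)"
proof (induction v)
  case Nil then show ?case by simp
next
  case (Cons a v)
  have "0 \<le> (\<Sum>x\<leftarrow>v. f x)" using Cons.prems sl_mono[of v "\<lambda>_. 0" f] by auto
  then show ?case using Cons by (cases "x0 = a") (auto intro: add_increasing add_increasing2)
qed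

lemma sl_cmult: "(\<Sum>x\<leftarrow>v. c * (f x::real)) = c * (\<Sum>x\<leftarrow>v. f x)"
  by (induction v) (auto simp: algebra_simps)

lemma sl_div: "(\<Sum>x\<leftarrow>v. (f x::real) / c) = (\<Sum>x\<leftarrow>v. f x) / c"
  by (induction v) (auto simp: add_divide_distrib)

lemma sl_cont: "(\<And>x. x \<in> set v \<Longrightarrow> continuous_on S (f x)) \<Longrightarrow> continuous_on S (\<lambda>s. (\<Sum>x\<leftarrow>v. (f x s::real)))"
  by (induction v) (auto intro!: continuous_intros)

lemma sl_rep0: "sum_list (replicate k (0::real)) = 0"
  by (induction k) auto

locale psi_ctx =
  fixes \<psi> :: "real \<Rightarrow> real"
  assumes cont: "continuous_on {0..1} \<psi>"
    and conv: "convex_on {0..1} \<psi>"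
    and incr: "strict_mono_on {0..1} \<psi>"
    and surj: "\<psi> ` {0..1} = {0..1}"
begin

lemma psi0: "\<psi> 0 = 0"
proof -
  obtain a where a: "a \<in> {0..1}" "\<psi> a = 0" using surj by (metis atLeastAtMost_iff imageE order_refl zero_le_one)
  have "\<psi> 0 \<le> \<psi> a" using a by (intro strict_mono_on_leD[OF incr]) auto
  moreover have "\<psi> 0 \<ge> 0" using surj by auto
  ultimately show ?thesis using a by auto
qed

lemma psi1: "\<psi> 1 = 1"
proof -
  obtain a where a: "a \<in> {0..1}" "\<psi> a = 1" using surj by (metis atLeastAtMost_iff imageE order_refl zero_le_one)
  have "\<psi> a \<le> \<psi> 1" using a by (intro strict_mono_on_leD[OF incr]) auto
  moreover have "\<psi> 1 \<le> 1" using surj by auto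
  ultimately show ?thesis using a by auto
qed

lemma psi_nonneg: "z \<in> {0..1} \<Longrightarrow> 0 \<le> \<psi> z"
  using surj by auto

lemma psi_pos: "0 < z \<Longrightarrow> z \<le> 1 \<Longrightarrow> 0 < \<psi> z"
  using strict_mono_onD[OF incr, of 0 z] psi0 by auto

lemma psi_le: "0 \<le> z \<Longrightarrow> z \<le> 1 \<Longrightarrow> \<psi> z \<le> z"
  using convex_onD[OF conv, of z 0 1] psi0 psi1 by auto

lemma psi_mono: "0 \<le> a \<Longrightarrow> a \<le> b \<Longrightarrow> b \<le> 1 \<Longrightarrow> \<psi> a \<le> \<psi> b"
  by (intro strict_mono_on_leD[OF incr]) auto

lemma psi_smono: "0 \<le> a \<Longrightarrow> a < b \<Longrightarrow> b \<le> 1 \<Longrightarrow> \<psi> a < \<psi> b"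
  by (intro strict_mono_onD[OF incr]) auto

lemma pn_unique:
  assumes "pnP \<psi> v s1" "pnP \<psi> v s2" "x0 \<in> set v" "x0 \<noteq> 0"
  shows "s1 = s2"
proof -
  have main: False if A: "pnP \<psi> v a" "pnP \<psi> v b" "a < b" for a b
  proof -
    have "(\<Sum>x\<leftarrow>v. \<psi> (\<bar>x\<bar> / b)) < (\<Sum>x\<leftarrow>v. \<psi> (\<bar>x\<bar> / a))"
    proof (rule sl_strict[of v _ _ x0])
      fix x assume "x \<in> set v"
      then show "\<psi> (\<bar>x\<bar> / b) \<le> \<psi> (\<bar>x\<bar> / a)" using A
        by (intro psi_mono) (auto simp: pnP_def intro: divide_left_mono)
    next
      show "x0 \<in> set v" by fact
      show "\<psi> (\<bar>x0\<bar> / b) < \<psi> (\<bar>x0\<bar> / a)" using A assms(3,4)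
        by (intro psi_smono) (auto simp: pnP_def intro: divide_strict_left_mono)
    qed
    then show False using A by (simp add: pnP_def)
  qed
  show ?thesis using main[of s1 s2] main[of s2 s1] assms by (cases s1 s2 rule: linorder_cases) auto
qed

lemma pn_exists:
  assumes "x0 \<in> set v" "x0 \<noteq> 0"
  shows "\<exists>s. pnP \<psi> v s"
proof -
  define M where "M = Max (abs ` set v)"
  define S where "S = (\<Sum>x\<leftarrow>v. \<bar>x\<bar>)"
  define F where "F = (\<lambda>s. \<Sum>x\<leftarrow>v. \<psi> (\<bar>x\<bar> / s))"
  have fin: "finite (abs ` set v)" "abs ` set v \<noteq> {}" using assms by auto
  have leM: "\<bar>x\<bar> \<le> M" if "x \<in> set v" for x using that fin unfolding M_def by auto
  obtain xm where xm: "xm \<in> set v" "\<bar>xm\<bar> = M" using Max_in[OF fin] unfolding M_def by auto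
  have Mpos: "M > 0" using leM[OF assms(1)] assms(2) by auto
  have MS: "M \<le> S" unfolding S_def using sl_nonneg_mem[where f=abs and v=v ] xm by auto
  have FM: "1 \<le> F M"
  proof -
    have "\<psi> (\<bar>xm\<bar> / M) \<le> F M" unfolding F_def
      by (rule sl_nonneg_mem[OF _ xm(1)]) (use leM Mpos in \<open>auto intro!: psi_nonneg\<close>)
    then show ?thesis using xm Mpos psi1 by auto
  qed
  have FS: "F S \<le> 1"
  proof -
    have "F S \<le> (\<Sum>x\<leftarrow>v. \<bar>x\<bar> / S)" unfolding F_def
      by (rule sl_mono) (use leM Mpos MS in \<open>auto intro!: psi_le dest: leM\<close>)
    also have "\<dots> = 1" using sl_div[where f=abs and v=v and c=S] Mpos MS unfolding S_def by auto
    finally show ?thesis .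
  qed
  have cF: "continuous_on {M..S} F" unfolding F_def
  proof (rule sl_cont)
    fix x assume x: "x \<in> set v"
    show "continuous_on {M..S} (\<lambda>s. \<psi> (\<bar>x\<bar> / s))"
    proof (rule continuous_on_compose2[OF cont])
      show "continuous_on {M..S} (\<lambda>s. \<bar>x\<bar> / s)" using Mpos by (intro continuous_intros) auto
      show "(\<lambda>s. \<bar>x\<bar> / s) ` {M..S} \<subseteq> {0..1}" using leM[OF x] Mpos by auto
    qed
  qed
  obtain s where s: "M \<le> s" "s \<le> S" "F s = 1" using IVT2'[OF FS FM MS cF] by auto
  have "pnP \<psi> v s" unfolding pnP_def using s Mpos leM F_def by (auto dest: leM)
  then show ?thesis by blast
qed

lemma pn_char:
  assumes "x0 \<in> set v" "x0 \<noteq> 0"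
  shows "pnP \<psi> v (psi_norm \<psi> v)"
proof -
  have "\<exists>!s. pnP \<psi> v s" using pn_exists[OF assms] pn_unique[OF _ _ assms] by blast
  then show ?thesis unfolding psi_norm_alt using assms by (auto intro: theI')
qed

lemma pn_eq:
  assumes "x0 \<in> set v" "x0 \<noteq> 0" "pnP \<psi> v s"
  shows "psi_norm \<psi> v = s"
  using pn_unique[OF pn_char[OF assms(1,2)] assms(3) assms(1,2)] .

lemma psi_mult:
  assumes d1: "\<And>x. x \<in> {0..1} \<Longrightarrow> (\<psi> has_real_derivative d1 x) (at x within {0..1})"
    and d1_pos: "\<And>x. x \<in> {0<..1} \<Longrightarrow> d1 x > 0"
    and ratio1: "strict_mono_on {0<..1} (\<lambda>x. x * d1 x / \<psi> x)"
    and l: "0 < l" "l \<le> 1" and y: "0 \<le> y" "y \<le> 1"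
  shows "\<psi> l * \<psi> y \<le> \<psi> (l * y)"
proof (cases "y = 0 \<or> l = 1")
  case True
  then show ?thesis using psi0 psi1 by auto
next
  case False
  then have yp: "0 < y" and l1: "l < 1" using y l by auto
  define Q where "Q = (\<lambda>m. \<psi> (m * y) / \<psi> m)"
  have "Q 1 \<le> Q l"
  proof (rule DERIV_nonpos_imp_decreasing_open[of l 1 Q])
    show "l \<le> 1" by fact
  next
    fix m assume m: "l < m" "m < 1"
    have mp: "0 < m" using m l by auto
    have my3: "m * y \<le> m" using mp y by (simp add: mult_le_cancel_left1)
    have my: "0 < m * y" "m * y < 1" "m * y \<le> m"
      using mp yp apply simp
      using my3 m(2) apply linarith
      using my3 .
    have Dm: "(\<psi> has_real_derivative d1 m) (at m)"
      using d1[of m] m mp at_within_interior[of m "{0..1::real}"] by auto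
    have Dmy0: "(\<psi> has_real_derivative d1 (m*y)) (at (m*y))"
      using d1[of "m*y"] my at_within_interior[of "m*y" "{0..1::real}"] by auto
    have Dmy: "((\<lambda>m. \<psi> (m * y)) has_real_derivative d1 (m*y) * y) (at m)"
    proof -
      have "((\<lambda>m. m * y) has_real_derivative y) (at m)"
        by (auto intro!: derivative_eq_intros)
      from DERIV_chain2[where f=\<psi> and g="\<lambda>m. m * y", OF Dmy0 this] show ?thesis by simp
    qed
    have pm: "\<psi> m > 0" "\<psi> (m*y) > 0" using psi_pos mp m my by auto
    have "(m*y) * d1 (m*y) / \<psi> (m*y) \<le> m * d1 m / \<psi> m"
      using strict_mono_on_leD[OF ratio1, of "m*y" m] my m by auto
    then have "(m*y) * d1 (m*y) * \<psi> m \<le> m * d1 m * \<psi> (m*y)"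
      using pm by (simp add: field_simps)
    then have "m * (d1 (m*y) * y * \<psi> m) \<le> m * (\<psi> (m*y) * d1 m)"
      by (simp add: algebra_simps)
    then have num: "d1 (m*y) * y * \<psi> m - \<psi> (m*y) * d1 m \<le> 0"
      using mp by (simp add: mult_le_cancel_left_pos)
    have "(Q has_real_derivative (d1 (m*y) * y * \<psi> m - \<psi> (m*y) * d1 m) / (\<psi> m * \<psi> m)) (at m)"
      unfolding Q_def using DERIV_divide[OF Dmy Dm] pm by auto
    moreover have "(d1 (m*y) * y * \<psi> m - \<psi> (m*y) * d1 m) / (\<psi> m * \<psi> m) \<le> 0"
      using num pm by (intro divide_nonpos_pos) auto
    ultimately show "\<exists>D. (Q has_real_derivative D) (at m) \<and> D \<le> 0" by blast
  next
    show "continuous_on {l..1} Q" unfolding Q_def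
    proof (intro continuous_on_divide)
      show "continuous_on {l..1} (\<lambda>m. \<psi> (m * y))"
        by (rule continuous_on_compose2[OF cont]) (use l y in \<open>auto intro!: continuous_intros simp: mult_le_one\<close>)
      show "continuous_on {l..1} \<psi>" by (rule continuous_on_subset[OF cont]) (use l in auto)
      show "\<forall>x\<in>{l..1}. \<psi> x \<noteq> 0" using psi_pos l by (metis atLeastAtMost_iff less_le_trans order.strict_iff_not)
    qed
  qed
  then have "\<psi> y \<le> \<psi> (l*y) / \<psi> l" unfolding Q_def using psi1 by simp
  then show ?thesis using psi_pos[OF l] by (simp add: field_simps)
qed

end

theorem lemma5p2:
  fixes \<psi> d1 d2 d3 :: "real \<Rightarrow> real" and n :: nat and r :: real
  assumes cont: "continuous_on {0..1} \<psi>"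
    and conv: "convex_on {0..1} \<psi>"
    and incr: "strict_mono_on {0..1} \<psi>"
    and surj: "\<psi> ` {0..1} = {0..1}"
    and d1: "\<And>x. x \<in> {0..1} \<Longrightarrow> (\<psi> has_real_derivative d1 x) (at x within {0..1})"
    and d2: "\<And>x. x \<in> {0..1} \<Longrightarrow> (d1 has_real_derivative d2 x) (at x within {0..1})"
    and d3: "\<And>x. x \<in> {0..1} \<Longrightarrow> (d2 has_real_derivative d3 x) (at x within {0..1})"
    and d1_pos: "\<And>x. x \<in> {0<..1} \<Longrightarrow> d1 x > 0"
    and ratio1: "strict_mono_on {0<..1} (\<lambda>x. x * d1 x / \<psi> x)"
    and ratio2: "strict_mono_on {0<..1} (\<lambda>x. x * d2 x / d1 x)"
    and n: "n \<ge> 2"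
    and r: "r \<ge> 0"
  shows "psi_norm \<psi> [1, r] \<in>
           {psi_norm \<psi> (y @ [r]) | y. length y = n - 1 \<and> (\<forall>t\<in>set y. t \<ge> 0) \<and> psi_norm \<psi> y = 1}
       \<and> (\<forall>y. length y = n - 1 \<and> (\<forall>t\<in>set y. t \<ge> 0) \<and> psi_norm \<psi> y = 1
              \<longrightarrow> psi_norm \<psi> [1, r] \<le> psi_norm \<psi> (y @ [r]))"
proof -
  interpret P: psi_ctx \<psi> using cont conv incr surj by unfold_locales
  define y0 where "y0 = (1::real) # replicate (n - 2) 0"
  have ly0: "length y0 = n - 1" using n unfolding y0_def by auto
  have y0nn: "\<forall>t\<in>set y0. t \<ge> 0" unfolding y0_def by auto
  have y0n: "psi_norm \<psi> y0 = 1"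
    by (rule P.pn_eq[of 1]) (auto simp: y0_def pnP_def P.psi0 P.psi1 sl_rep0)
  have eqP: "pnP \<psi> (y0 @ [r]) = pnP \<psi> [1, r]"
    by (rule ext) (auto simp: y0_def pnP_def P.psi0 sl_rep0)
  have eq: "psi_norm \<psi> (y0 @ [r]) = psi_norm \<psi> [1, r]"
    unfolding psi_norm_alt eqP by (simp add: y0_def)
  have part1: "psi_norm \<psi> [1, r] \<in>
           {psi_norm \<psi> (y @ [r]) | y. length y = n - 1 \<and> (\<forall>t\<in>set y. t \<ge> 0) \<and> psi_norm \<psi> y = 1}"
    using ly0 y0nn y0n eq by force
  have part2: "psi_norm \<psi> [1, r] \<le> psi_norm \<psi> (y @ [r])"
    if yl: "length y = n - 1" and ynn: "\<forall>t\<in>set y. t \<ge> 0" and yn: "psi_norm \<psi> y = 1" for y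
  proof -
    obtain yk where yk: "yk \<in> set y" "yk \<noteq> 0"
      using yn unfolding psi_norm_alt by (auto split: if_splits)
    have ykp: "yk > 0" using yk ynn by force
    have Py: "pnP \<psi> y 1" using P.pn_char[OF yk] yn by simp
    then have yle: "\<forall>x\<in>set y. x \<le> 1" and ysum: "(\<Sum>x\<leftarrow>y. \<psi> x) = 1"
      using ynn unfolding pnP_def by (auto cong: map_cong)
    have ysum': "(\<Sum>x\<leftarrow>y. \<psi> x) = 1"
    proof -
      have "(\<Sum>x\<leftarrow>y. \<psi> (\<bar>x\<bar> / 1)) = (\<Sum>x\<leftarrow>y. \<psi> x)"
        using ynn by (intro arg_cong[where f=sum_list] map_cong) auto
      then show ?thesis using Py unfolding pnP_def by simp
    qed
    define t where "t = psi_norm \<psi> (y @ [r])"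
    define s where "s = psi_norm \<psi> [1, r]"
    have Pt: "pnP \<psi> (y @ [r]) t" unfolding t_def
      by (rule P.pn_char[of yk]) (use yk in auto)
    have Ps: "pnP \<psi> [1, r] s" unfolding s_def
      by (rule P.pn_char[of 1]) auto
    have tp: "t > 0" and tle: "\<forall>x\<in>set y. x / t \<le> 1" and rt: "r / t \<le> 1"
      and tsum: "(\<Sum>x\<leftarrow>y. \<psi> (x / t)) + \<psi> (r / t) = 1"
    proof -
      have "(\<Sum>x\<leftarrow>y. \<psi> (\<bar>x\<bar> / t)) = (\<Sum>x\<leftarrow>y. \<psi> (x / t))"
        using ynn by (intro arg_cong[where f=sum_list] map_cong) auto
      then show "t > 0" "\<forall>x\<in>set y. x / t \<le> 1" "r / t \<le> 1"
        "(\<Sum>x\<leftarrow>y. \<psi> (x / t)) + \<psi> (r / t) = 1"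
        using Pt ynn r unfolding pnP_def by auto
    qed
    have sp: "s > 0" and s1: "1 / s \<le> 1" and rs: "r / s \<le> 1" and ssum: "\<psi> (1/s) + \<psi> (r/s) = 1"
      using Ps r unfolding pnP_def by auto
    have t1: "t \<ge> 1"
    proof (rule ccontr)
      assume "\<not> t \<ge> 1"
      then have tl: "t < 1" by simp
      have "(\<Sum>x\<leftarrow>y. \<psi> x) < (\<Sum>x\<leftarrow>y. \<psi> (x / t))"
      proof (rule sl_strict[OF _ yk(1)])
        fix x assume x: "x \<in> set y"
        have x0: "0 \<le> x" using x ynn by auto
        have "x \<le> x / t" using x0 tp tl by (simp add: le_divide_eq mult_left_le)
        then show "\<psi> x \<le> \<psi> (x / t)" using x ynn tle by (intro P.psi_mono) auto
      next
        have "yk < yk / t" using ykp tp tl by (simp add: less_divide_eq)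
        then show "\<psi> yk < \<psi> (yk / t)" using yk ynn tle by (intro P.psi_smono) auto
      qed
      moreover have "\<psi> (r / t) \<ge> 0" using rt r tp by (intro P.psi_nonneg) auto
      ultimately show False using tsum ysum' by linarith
    qed
    show ?thesis
    proof (rule ccontr)
      assume "\<not> psi_norm \<psi> [1, r] \<le> psi_norm \<psi> (y @ [r])"
      then have ts: "t < s" unfolding s_def t_def by simp
      have "(\<Sum>x\<leftarrow>y. \<psi> (1/t) * \<psi> x) \<le> (\<Sum>x\<leftarrow>y. \<psi> (x / t))"
      proof (rule sl_mono)
        fix x assume x: "x \<in> set y"
        have "\<psi> (1/t) * \<psi> x \<le> \<psi> ((1/t) * x)"
          by (rule P.psi_mult[OF d1 d1_pos ratio1]) (use x ynn yle tp t1 in auto)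
        then show "\<psi> (1/t) * \<psi> x \<le> \<psi> (x / t)" by simp
      qed
      then have A: "\<psi> (1/t) \<le> (\<Sum>x\<leftarrow>y. \<psi> (x / t))" using sl_cmult[of "\<psi> (1/t)" \<psi> y] ysum' by simp
      have B: "\<psi> (1/s) < \<psi> (1/t)" using ts tp t1 by (intro P.psi_smono) (auto simp: frac_less2)
      have C: "\<psi> (r/s) \<le> \<psi> (r/t)" using ts tp r rt by (intro P.psi_mono) (auto simp: divide_left_mono)
      show False using A B C ssum tsum by linarith
    qed
  qed
  show ?thesis using part1 part2 by blast
qed

end
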